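(* Let $n\ge 2$, $k\ge 1$, $m=2n+k$. Let $\tau,\rho$ be the automorphisms of $SG_{n,k}$ given by $\tau S=S+1$ and $\rho S=k-S$ (elementwise, arithmetic modulo $m$), and let $\bar\tau,\bar\rho$ be the automorphisms of $K_{k+2}$ given by $\bar\tau x=x+1$ and $\bar\rho x=k-x$ (arithmetic modulo $k+2$). Let $c\colon SG_{n,k}\to K_{k+2}$ be the canonical colouring. Then $c\circ\tau\sim\bar\tau\circ c$ and $c\circ\rho\sim\bar\rho\circ c$.
   Context: A subset $S\subseteq\{0,\dots,m-1\}$ is stable if $\{i,i+1\}\not\subseteq S$ for all $0\le i\le m-2$ and $\{0,m-1\}\not\subseteq S$. The stable Kneser graph $SG_{n,k}$ has as vertices the stable $n$-element subsets of $\{0,\dots,m-1\}$, two being adjacent iff they are disjoint. $K_{k+2}$ is the loopless complete graph on $\{0,\dots,k+1\}$; the canonical colouring is $c(S)=\min S$ (with $S\subseteq\{0,\dots,m-1\}$ viewed as integers). For graphs $G,H$ and maps $f,g\colon V(G)\to V(H)$, $f\sim g$ means $(f(u),g(v))\in E(H)$ for all edges $(u,v)$ of $G$ (edges are ordered pairs of a symmetric relation). *)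

theory Defs
  imports Main
begin

definition stable :: "nat \<Rightarrow> nat set \<Rightarrow> bool" where
  "stable m S \<longleftrightarrow> S \<subseteq> {..<m}
     \<and> (\<forall>i. i + 1 < m \<longrightarrow> \<not> {i, i + 1} \<subseteq> S)
     \<and> \<not> {0, m - 1} \<subseteq> S"

definition SG_verts :: "nat \<Rightarrow> nat \<Rightarrow> nat set set" where
  "SG_verts n k = {S. stable (2*n + k) S \<and> card S = n}"

definition SG_edges :: "nat \<Rightarrow> nat \<Rightarrow> (nat set \<times> nat set) set" where
  "SG_edges n k = {(S, T). S \<in> SG_verts n k \<and> T \<in> SG_verts n k \<and> S \<inter> T = {}}"

definition K_edges :: "nat \<Rightarrow> (nat \<times> nat) set" where
  "K_edges k = {(x, y). x \<le> k + 1 \<and> y \<le> k + 1 \<and> x \<noteq> y}"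

definition canon_col :: "nat set \<Rightarrow> nat" where
  "canon_col S = Min S"

text \<open>f ~ g : (f u, g v) is an edge of H for every edge (u,v) of G.\<close>
definition hom_rel :: "('a \<times> 'a) set \<Rightarrow> ('b \<times> 'b) set \<Rightarrow> ('a \<Rightarrow> 'b) \<Rightarrow> ('a \<Rightarrow> 'b) \<Rightarrow> bool" where
  "hom_rel EG EH f g \<longleftrightarrow> (\<forall>(u, v) \<in> EG. (f u, g v) \<in> EH)"

definition tau :: "nat \<Rightarrow> nat \<Rightarrow> nat set \<Rightarrow> nat set" where
  "tau n k S = (\<lambda>x. nat ((int x + 1) mod int (2*n + k))) ` S"

definition rho :: "nat \<Rightarrow> nat \<Rightarrow> nat set \<Rightarrow> nat set" where
  "rho n k S = (\<lambda>x. nat ((int k - int x) mod int (2*n + k))) ` S"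

definition tau_bar :: "nat \<Rightarrow> nat \<Rightarrow> nat" where
  "tau_bar k x = nat ((int x + 1) mod int (k + 2))"

definition rho_bar :: "nat \<Rightarrow> nat \<Rightarrow> nat" where
  "rho_bar k x = nat ((int k - int x) mod int (k + 2))"

end

theory Submission imports Defs begin
lemma nocons_card:
  "\<forall>S. S \<subseteq> {a..<a+L} \<and> (\<forall>i. i \<in> S \<longrightarrow> i + 1 \<notin> S) \<longrightarrow> card S \<le> (L+1) div 2"
proof (induction L rule: less_induct)
  case (less L)
  show ?case
  proof (intro allI impI)
    fix S assume h: "S \<subseteq> {a..<a+L} \<and> (\<forall>i. i \<in> S \<longrightarrow> i + 1 \<notin> S)"
    show "card S \<le> (L+1) div 2"
    proof (cases L)
      case 0 then show ?thesis using h by auto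
    next
      case (Suc L')
      show ?thesis
      proof (cases "a + L' \<in> S")
        case False
        then have "S \<subseteq> {a..<a+L'}" using h Suc by (auto simp: subset_iff less_Suc_eq)
        then have "card S \<le> (L'+1) div 2" using less[of L'] h Suc by blast
        then show ?thesis using Suc by simp
      next
        case True
        show ?thesis
        proof (cases L')
          case 0 then have "S \<subseteq> {a}" using h Suc by auto
          then have "card S \<le> 1" using card_mono[of "{a}" S] by simp
          then show ?thesis using Suc 0 by simp
        next
          case (Suc L'')
          have "a + L'' \<notin> S" using h True Suc by (metis add_Suc_right Suc_eq_plus1)
          have sub: "S - {a+L'} \<subseteq> {a..<a+L''}"
          proof
            fix x assume x: "x \<in> S - {a+L'}"
            then have "a \<le> x" "x < a + L" "x \<noteq> a + L'" "x \<noteq> a + L''" using h \<open>a + L'' \<notin> S\<close> by auto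
            then show "x \<in> {a..<a+L''}" using \<open>L = Suc L'\<close> Suc by auto
          qed
          have "card (S - {a+L'}) \<le> (L''+1) div 2" 
          proof -
            have "L'' < L" using \<open>L = Suc L'\<close> Suc by simp
            moreover have "\<forall>i. i \<in> S - {a+L'} \<longrightarrow> i + 1 \<notin> S - {a+L'}" using h by auto
            ultimately show ?thesis using less[of L''] sub by blast
          qed
          moreover have "finite S" using h finite_subset by blast
          ultimately have "card S \<le> (L''+1) div 2 + 1" using True by (simp add: card_Diff_singleton)
          then show ?thesis using \<open>L = Suc L'\<close> Suc by simp
        qed
      qed
    qed
  qed
qed

lemma m1: "x < (m::nat) \<Longrightarrow> nat ((int x + 1) mod int m) = (if x = m - 1 then 0 else x + 1)"
proof (cases "x + 1 < m")
  case True assume "x < m" then show ?thesis using True by (simp add: mod_pos_pos_trivial nat_add_distrib)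
next
  case False assume "x < m"
  then have "int x + 1 = int m" using False by linarith
  then show ?thesis using False \<open>x<m\<close> by simp
qed

lemma m2: "x < (m::nat) \<Longrightarrow> k < m \<Longrightarrow> nat ((int k - int x) mod int m) = (if x \<le> k then k - x else m + k - x)"
proof (cases "x \<le> k")
  case True assume "x < m" "k < m" then show ?thesis using True by (simp add: mod_pos_pos_trivial of_nat_diff)
next
  case False assume a: "x < m" "k < m"
  have "(int k - int x) mod int m = (int k - int x + int m) mod int m" by simp
  also have "\<dots> = int k - int x + int m" using a False by (intro mod_pos_pos_trivial) auto
  finally show ?thesis using False a by simp
qed

lemma vert_props:
  assumes "S \<in> SG_verts n k" "n \<ge> 1"
  shows "finite S" "S \<noteq> {}" "S \<subseteq> {..<2*n+k}" "Min S \<le> k + 1"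
        "Min S = k + 1 \<Longrightarrow> 2*n+k-1 \<in> S"
proof -
  let ?m = "2*n+k"
  have st: "stable ?m S" and c: "card S = n" using assms by (auto simp: SG_verts_def)
  show sub: "S \<subseteq> {..<?m}" using st by (simp add: stable_def)
  show fin: "finite S" using sub finite_subset by blast
  show ne: "S \<noteq> {}" using c assms(2) by auto
  have nc: "\<forall>i. i \<in> S \<longrightarrow> i + 1 \<notin> S"
  proof (intro allI impI)
    fix i assume "i \<in> S"
    show "i + 1 \<notin> S"
    proof
      assume "i + 1 \<in> S"
      then have "i + 1 < ?m" using sub by auto
      then show False using st \<open>i \<in> S\<close> \<open>i+1 \<in> S\<close> unfolding stable_def by blast
    qed
  qed
  have mn: "\<forall>x\<in>S. Min S \<le> x" using fin by simp
  show "Min S \<le> k + 1"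
  proof (rule ccontr)
    assume "\<not> Min S \<le> k + 1"
    then have "S \<subseteq> {k+2..<(k+2)+(2*n-2)}" using sub mn assms(2) by fastforce
    then have "card S \<le> (2*n-2+1) div 2" using nocons_card[of "k+2" "2*n-2"] nc by blast
    then show False using c assms(2) by linarith
  qed
  show "2*n+k-1 \<in> S" if h: "Min S = k + 1"
  proof (rule ccontr)
    assume "2*n+k-1 \<notin> S"
    have "S \<subseteq> {k+1..<(k+1)+(2*n-2)}"
    proof
      fix x assume "x \<in> S"
      then have "x < 2*n+k" "x \<noteq> 2*n+k-1" "k+1 \<le> x" using sub mn h \<open>2*n+k-1 \<notin> S\<close> by auto
      then show "x \<in> {k+1..<(k+1)+(2*n-2)}" using assms(2) by auto
    qed
    then have "card S \<le> (2*n-2+1) div 2" using nocons_card[of "k+1" "2*n-2"] nc by blast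
    then show False using c assms(2) by linarith
  qed
qed


lemma tb: "x \<le> k + 1 \<Longrightarrow> tau_bar k x = (if x = k + 1 then 0 else x + 1)"
  unfolding tau_bar_def using m1[of x "k+2"] by simp

lemma rb: "x \<le> k + 1 \<Longrightarrow> rho_bar k x = (if x \<le> k then k - x else k + 1)"
  unfolding rho_bar_def using m2[of x "k+2" k] by (cases "x \<le> k") auto

lemma tau_edge:
  assumes e: "(S, T) \<in> SG_edges n k" and n: "n \<ge> 1"
  shows "(Min (tau n k S), tau_bar k (Min T)) \<in> K_edges k"
proof -
  let ?m = "2*n+k"
  have S: "S \<in> SG_verts n k" and T: "T \<in> SG_verts n k" and dj: "S \<inter> T = {}"
    using e by (auto simp: SG_edges_def)
  note PS = vert_props[OF S n] and PT = vert_props[OF T n]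
  have MT: "Min T \<in> T" using PT(1,2) by simp
  have MS: "Min S \<in> S" using PS(1,2) by simp
  have tS: "tau n k S = (\<lambda>x. if x = ?m - 1 then 0 else x + 1) ` S"
  proof -
    have "\<And>x. x \<in> S \<Longrightarrow> nat ((int x + 1) mod int ?m) = (if x = ?m - 1 then 0 else x + 1)"
      using PS(3) by (intro m1) auto
    then show ?thesis unfolding tau_def by (rule image_cong[OF refl])
  qed
  have fin: "finite (tau n k S)" using PS(1) tS by simp
  have tbT: "tau_bar k (Min T) = (if Min T = k + 1 then 0 else Min T + 1)" by (rule tb[OF PT(4)])
  show ?thesis
  proof (cases "?m - 1 \<in> S")
    case True
    note mS = True
    have "0 \<in> tau n k S" unfolding tS using True by (intro image_eqI[where x="?m - 1"]) auto
    then have "Min (tau n k S) = 0" using fin by (intro Min_eqI) auto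
    moreover have "Min T \<noteq> k + 1"
    proof
      assume "Min T = k + 1" then have "?m - 1 \<in> T" by (rule PT(5))
      then have "?m - 1 \<in> S \<inter> T" using mS by simp
      then show False using dj by simp
    qed
    ultimately show ?thesis using tbT PT(4) by (auto simp: K_edges_def)
  next
    case False
    note nS = False
    have tS2: "tau n k S = Suc ` S" unfolding tS
    proof (rule image_cong[OF refl])
      fix x assume "x \<in> S" then have "x \<noteq> ?m - 1" using nS by auto
      then show "(if x = ?m - 1 then 0 else x + 1) = Suc x" by simp
    qed
    have "Min (tau n k S) = Min S + 1" unfolding tS2
    proof (rule Min_eqI)
      show "finite (Suc ` S)" using PS(1) by simp
      show "Min S + 1 \<in> Suc ` S" by (rule image_eqI[where x="Min S"]) (simp_all add: MS)
      fix y assume "y \<in> Suc ` S"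
      then obtain x where x: "x \<in> S" "y = Suc x" by blast
      have "Min S \<le> x" by (rule Min_le[OF PS(1) x(1)])
      then show "Min S + 1 \<le> y" using x(2) by simp
    qed
    moreover have "Min S \<noteq> k + 1"
    proof
      assume "Min S = k + 1" then have "?m - 1 \<in> S" by (rule PS(5))
      then show False using nS by simp
    qed
    moreover have "Min S \<noteq> Min T"
    proof
      assume "Min S = Min T"
      then have "Min S \<in> S \<inter> T" using MS MT by simp
      then show False using dj by simp
    qed
    ultimately show ?thesis using tbT PT(4) PS(4) by (auto simp: K_edges_def)
  qed
qed

lemma rho_edge:
  assumes e: "(S, T) \<in> SG_edges n k" and n: "n \<ge> 1"
  shows "(Min (rho n k S), rho_bar k (Min T)) \<in> K_edges k"
proof -
  let ?m = "2*n+k"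
  have S: "S \<in> SG_verts n k" and T: "T \<in> SG_verts n k" and dj: "S \<inter> T = {}"
    using e by (auto simp: SG_edges_def)
  note PS = vert_props[OF S n] and PT = vert_props[OF T n]
  have MT: "Min T \<in> T" using PT(1,2) by simp
  have MS: "Min S \<in> S" using PS(1,2) by simp
  have km: "k < ?m" using n by simp
  have rS: "rho n k S = (\<lambda>x. if x \<le> k then k - x else ?m + k - x) ` S"
  proof -
    have "\<And>x. x \<in> S \<Longrightarrow> nat ((int k - int x) mod int ?m) = (if x \<le> k then k - x else ?m + k - x)"
      using PS(3) km by (intro m2) auto
    then show ?thesis unfolding rho_def by (rule image_cong[OF refl])
  qed
  have fin: "finite (rho n k S)" using PS(1) rS by simp
  have rbT: "rho_bar k (Min T) = (if Min T \<le> k then k - Min T else k + 1)" by (rule rb[OF PT(4)])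
  show ?thesis
  proof (cases "\<exists>x\<in>S. x \<le> k")
    case True
    note ex = True
    define A where "A = {x\<in>S. x \<le> k}"
    define a where "a = Max A"
    have finA: "finite A" unfolding A_def using PS(1) by simp
    have neA: "A \<noteq> {}" unfolding A_def using ex by blast
    have aA: "a \<in> A" unfolding a_def using finA neA by (rule Max_in)
    have aS: "a \<in> S" and ak: "a \<le> k" using aA unfolding A_def by auto
    have amax: "\<And>y. y \<in> S \<Longrightarrow> y \<le> k \<Longrightarrow> y \<le> a"
    proof -
      fix y assume "y \<in> S" "y \<le> k"
      then have "y \<in> A" unfolding A_def by blast
      then show "y \<le> a" unfolding a_def by (rule Max_ge[OF finA])
    qed
    have "Min (rho n k S) = k - a"
    proof (rule Min_eqI[OF fin])
      show "k - a \<in> rho n k S" unfolding rS using aS ak by (intro image_eqI[where x=a]) simp_all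
      show "\<And>y. y \<in> rho n k S \<Longrightarrow> k - a \<le> y"
      proof -
        fix y assume "y \<in> rho n k S"
        then obtain x where x: "x \<in> S" and y: "y = (if x \<le> k then k - x else ?m + k - x)"
          unfolding rS by blast
        have "x < ?m" using x PS(3) by blast
        show "k - a \<le> y"
        proof (cases "x \<le> k")
          case True note xk = True
          then have "x \<le> a" using amax x by blast
          then show ?thesis using y xk by simp
        next
          case False note xk = False
          then show ?thesis using y \<open>x < ?m\<close> ak by simp
        qed
      qed
    qed
    moreover have "a \<noteq> Min T" using aS MT dj by blast
    ultimately show ?thesis using rbT PT(4) ak unfolding K_edges_def by auto
  next
    case False
    note nex = False
    have "\<not> Min S \<le> k" using nex MS by blast
    then have "Min S = k + 1" using PS(4) by linarith
    then have mS: "?m - 1 \<in> S" using PS(5) by blast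
    have "Min (rho n k S) = k + 1"
    proof (rule Min_eqI[OF fin])
      show "k + 1 \<in> rho n k S" unfolding rS using mS n by (intro image_eqI[where x = "?m - 1"]) auto
      show "\<And>y. y \<in> rho n k S \<Longrightarrow> k + 1 \<le> y"
      proof -
        fix y assume "y \<in> rho n k S"
        then obtain x where x: "x \<in> S" "y = (if x \<le> k then k - x else ?m + k - x)" using rS by auto
        have "x < ?m" using x PS(3) by auto
        then show "k + 1 \<le> y" using x nex by auto
      qed
    qed
    moreover have "Min T \<noteq> k + 1" using \<open>Min S = k + 1\<close> MS MT dj by (metis disjoint_iff)
    ultimately show ?thesis using rbT PT(4) by (auto simp: K_edges_def)
  qed
qed

theorem lemma4p5:
  fixes n k :: nat
  assumes "n \<ge> 2" and "k \<ge> 1"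
  shows "hom_rel (SG_edges n k) (K_edges k) (canon_col \<circ> tau n k) (tau_bar k \<circ> canon_col)
       \<and> hom_rel (SG_edges n k) (K_edges k) (canon_col \<circ> rho n k) (rho_bar k \<circ> canon_col)"
proof -
  have n: "n \<ge> 1" using assms by simp
  show ?thesis unfolding hom_rel_def canon_col_def
    using tau_edge[OF _ n] rho_edge[OF _ n] by (simp add: case_prod_beta)
qed

end
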